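(* Let $(X,\mathcal F)$ be a measurable space, $Y=[0,1]$ or $Y=[0,\infty]$, and $\mu\colon\mathcal F\to Y$ a monotone measure. Let $\circ,\star,\Box\colon Y\times Y\to Y$ be non-decreasing operators, let $\circledcirc\colon Y\times Y\to Y$ be a non-decreasing and left-continuous operator, and let $\triangle\colon Y\times Y\to Y$ be an arbitrary operator. Assume that for all $a,b,c,d\in Y$ and all $t\ge 1$, $$a^t\circ b\ge (a\circ b)^t,\qquad (a\,\Box\, b)\circ(c\,\triangle\, d)\ge (a\circ c)\circledcirc(b\circ d).$$ Let $p,q\ge 1$, $r,s>0$, let $A,B\in\mathcal F$ and let $f,g,h\colon X\to Y$ be measurable functions such that the pairs $f|_A, g|_B$ and $f|_A, h|_B$ are each positively dependent with respect to $\mu$ and $\triangle$. Then $$\Big(\Big(\int_A f\circ\mu\Big)\circledcirc\Big(\int_B g\circ\mu\Big)\Big)^r\star\Big(\Big(\int_A f\circ\mu\Big)\circledcirc\Big(\int_B h\circ\mu\Big)\Big)^s\le\Big(\int_{A\cap B}(f\,\Box\, g)^p\circ\mu\Big)^{r/p}\star\Big(\int_{A\cap B}(f\,\Box\, h)^q\circ\mu\Big)^{s/q}.$$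
   Context: A monotone measure is a map $\mu\colon\mathcal F\to Y$ with $\mu(\emptyset)=0$, $\mu(X)>0$ and $\mu(A)\le\mu(B)$ whenever $A\subset B$. An operator $\circ\colon Y\times Y\to Y$ is non-decreasing if $a\circ c\ge b\circ d$ whenever $a\ge b$ and $c\ge d$; it is left-continuous if $\lim_n (x_n\circ y_n)=x\circ y$ whenever $x_n\nearrow x$, $y_n\nearrow y$ (strictly increasing sequences converging to $x$, $y$). For a measurable $h\colon X\to Y$, $A\in\mathcal F$ and a non-decreasing operator $\circ$, the generalized Sugeno integral is $\int_A h\circ\mu=\sup_{\alpha\in Y}\{\alpha\circ\mu(A\cap\{h\ge\alpha\})\}$, where $\{h\ge\alpha\}=\{x\in X: h(x)\ge\alpha\}$. For $C\subset X$, $h|_C$ denotes the restriction and $\{h|_C\ge a\}=C\cap\{h\ge a\}$. Functions $f|_A$ and $g|_B$ are positively dependent with respect to $\mu$ and an operator $\triangle$ if for all $a,b\in Y$: $\mu(\{f|_A\ge a\}\cap\{g|_B\ge b\})\ge\mu(\{f|_A\ge a\})\,\triangle\,\mu(\{g|_B\ge b\})$. *)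

theory Defs
  imports "HOL-Analysis.Analysis"
begin

definition Yset_ok :: "ereal set \<Rightarrow> bool" where
  "Yset_ok Y \<longleftrightarrow> Y = {0..1} \<or> Y = {0..\<infinity>}"

text \<open>Real powers on Y (only used for nonnegative bases and positive exponents):
  \<infinity>^t = \<infinity>, otherwise the usual real power.\<close>

definition ypow :: "ereal \<Rightarrow> real \<Rightarrow> ereal" where
  "ypow x t = (if x = \<infinity> then \<infinity> else ereal (real_of_ereal x powr t))"

definition monotone_measure :: "'a measure \<Rightarrow> ereal set \<Rightarrow> ('a set \<Rightarrow> ereal) \<Rightarrow> bool" where
  "monotone_measure M Y \<mu> \<longleftrightarrow>
     (\<forall>A\<in>sets M. \<mu> A \<in> Y) \<and> \<mu> {} = 0 \<and> \<mu> (space M) > 0 \<and>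
     (\<forall>A\<in>sets M. \<forall>B\<in>sets M. A \<subseteq> B \<longrightarrow> \<mu> A \<le> \<mu> B)"

definition op_on :: "ereal set \<Rightarrow> (ereal \<Rightarrow> ereal \<Rightarrow> ereal) \<Rightarrow> bool" where
  "op_on Y op \<longleftrightarrow> (\<forall>a\<in>Y. \<forall>b\<in>Y. op a b \<in> Y)"

definition nondecreasing_op :: "ereal set \<Rightarrow> (ereal \<Rightarrow> ereal \<Rightarrow> ereal) \<Rightarrow> bool" where
  "nondecreasing_op Y op \<longleftrightarrow>
     (\<forall>a\<in>Y. \<forall>b\<in>Y. \<forall>c\<in>Y. \<forall>d\<in>Y. a \<ge> b \<and> c \<ge> d \<longrightarrow> op a c \<ge> op b d)"

definition left_continuous_op :: "ereal set \<Rightarrow> (ereal \<Rightarrow> ereal \<Rightarrow> ereal) \<Rightarrow> bool" where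
  "left_continuous_op Y op \<longleftrightarrow>
     (\<forall>xs ys x y. (\<forall>n. xs n \<in> Y \<and> ys n \<in> Y) \<and> x \<in> Y \<and> y \<in> Y \<and>
        strict_mono xs \<and> strict_mono ys \<and> xs \<longlonglongrightarrow> x \<and> ys \<longlonglongrightarrow> y
        \<longrightarrow> (\<lambda>n. op (xs n) (ys n)) \<longlonglongrightarrow> op x y)"

definition sugeno :: "'a measure \<Rightarrow> ereal set \<Rightarrow> (ereal \<Rightarrow> ereal \<Rightarrow> ereal) \<Rightarrow>
    ('a set \<Rightarrow> ereal) \<Rightarrow> 'a set \<Rightarrow> ('a \<Rightarrow> ereal) \<Rightarrow> ereal" where
  "sugeno M Y op \<mu> A h = (SUP \<alpha>\<in>Y. op \<alpha> (\<mu> (A \<inter> {x\<in>space M. h x \<ge> \<alpha>})))"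

definition pos_dependent :: "'a measure \<Rightarrow> ereal set \<Rightarrow> ('a set \<Rightarrow> ereal) \<Rightarrow>
    (ereal \<Rightarrow> ereal \<Rightarrow> ereal) \<Rightarrow> ('a \<Rightarrow> ereal) \<Rightarrow> 'a set \<Rightarrow> ('a \<Rightarrow> ereal) \<Rightarrow> 'a set \<Rightarrow> bool" where
  "pos_dependent M Y \<mu> tri f A g B \<longleftrightarrow>
     (\<forall>a\<in>Y. \<forall>b\<in>Y.
        \<mu> ((A \<inter> {x\<in>space M. f x \<ge> a}) \<inter> (B \<inter> {x\<in>space M. g x \<ge> b}))
          \<ge> tri (\<mu> (A \<inter> {x\<in>space M. f x \<ge> a})) (\<mu> (B \<inter> {x\<in>space M. g x \<ge> b})))"

end

theory Submission
  imports Defs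
begin

lemma ypow_nonneg: "0 \<le> ypow x t"
  by (simp add: ypow_def)

lemma ypow_mono: "0 \<le> x \<Longrightarrow> x \<le> y \<Longrightarrow> 0 \<le> t \<Longrightarrow> ypow x t \<le> ypow y t"
proof (cases "y = \<infinity>")
  case False
  assume a: "0 \<le> x" "x \<le> y" "0 \<le> t"
  then obtain a b where "x = ereal a" "y = ereal b" "0 \<le> a" "a \<le> b" using False
    by (cases x; cases y) auto
  then show ?thesis using a by (simp add: ypow_def powr_mono2)
qed (simp add: ypow_def)

lemma ypow_strict: "0 \<le> x \<Longrightarrow> x < y \<Longrightarrow> 0 < t \<Longrightarrow> ypow x t < ypow y t"
proof (cases "y = \<infinity>")
  case True
  assume a: "0 \<le> x" "x < y" "0 < t"
  then have "x \<noteq> \<infinity>" using True by auto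
  then show ?thesis using True by (simp add: ypow_def)
next
  case False
  assume a: "0 \<le> x" "x < y" "0 < t"
  then obtain a b where "x = ereal a" "y = ereal b" "0 \<le> a" "a < b" using False
    by (cases x; cases y) auto
  then show ?thesis using a by (simp add: ypow_def powr_less_mono2)
qed

lemma ypow_le_iff: "0 \<le> x \<Longrightarrow> 0 \<le> y \<Longrightarrow> 0 < t \<Longrightarrow> ypow x t \<le> ypow y t \<longleftrightarrow> x \<le> y"
  using ypow_mono[of x y t] ypow_strict[of y x t] by (auto simp: not_le[symmetric])

lemma ypow_ypow: "0 \<le> x \<Longrightarrow> 0 < a \<Longrightarrow> 0 < b \<Longrightarrow> ypow (ypow x a) b = ypow x (a*b)"
proof (cases "x = \<infinity>")
  case False
  assume h: "0 \<le> x" "0 < a" "0 < b"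
  then obtain r where "x = ereal r" "0 \<le> r" using False by (cases x) auto
  then show ?thesis using h by (simp add: ypow_def powr_powr)
qed (simp add: ypow_def)

lemma ypow_1: "0 \<le> x \<Longrightarrow> ypow x 1 = x"
  by (cases x) (auto simp: ypow_def)

lemma ypow_inY: "Y = {0..T} \<Longrightarrow> (T = 1 \<or> T = \<infinity>) \<Longrightarrow> x \<in> Y \<Longrightarrow> 0 < t \<Longrightarrow> ypow x t \<in> Y"
proof -
  assume h: "Y = {0..T}" "T = 1 \<or> T = \<infinity>" "x \<in> Y" "0 < t"
  have x: "0 \<le> x" "x \<le> T" using h(1,3) by auto
  show ?thesis
  proof (cases "T = \<infinity>")
    case True then show ?thesis using h(1) ypow_nonneg[of x t] by simp
  next
    case False
    then have T1: "T = 1" using h(2) by blast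
    have "ypow x t \<le> ypow 1 t" using x T1 h(4) by (intro ypow_mono) auto
    also have "ypow 1 t = 1" by (simp add: ypow_def)
    finally show ?thesis using h(1) T1 ypow_nonneg[of x t] by simp
  qed
qed

lemma SUP_inY: "Y = {0..T} \<Longrightarrow> 0 \<le> T \<Longrightarrow> (\<And>\<alpha>. \<alpha> \<in> Y \<Longrightarrow> F \<alpha> \<in> Y) \<Longrightarrow> (SUP \<alpha>\<in>Y. F \<alpha>) \<in> (Y::ereal set)"
proof -
  assume h: "Y = {0..T}" "0 \<le> T" "\<And>\<alpha>. \<alpha> \<in> Y \<Longrightarrow> F \<alpha> \<in> Y"
  have Y0: "0 \<in> Y" using h(1,2) by simp
  then have "F 0 \<le> (SUP \<alpha>\<in>Y. F \<alpha>)" by (rule SUP_upper)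
  moreover have "0 \<le> F 0" using h(3)[OF Y0] h(1) by simp
  moreover have "(SUP \<alpha>\<in>Y. F \<alpha>) \<le> T"
  proof (rule SUP_least)
    fix \<alpha> assume "\<alpha> \<in> Y" then show "F \<alpha> \<le> T" using h(3) h(1) by fastforce
  qed
  ultimately show ?thesis using h(1) by simp
qed

lemma approx_seq:
  fixes c :: ereal assumes "0 < c"
  shows "\<exists>xs. strict_mono xs \<and> (\<forall>n. 0 \<le> xs n \<and> xs n < c) \<and> xs \<longlonglongrightarrow> c"
proof (cases "c = \<infinity>")
  case True
  then show ?thesis
    by (intro exI[of _ "\<lambda>n. ereal (real n)"])
       (auto simp: strict_mono_def id_nat_ereal_tendsto_PInf)
next
  case False
  then obtain r where r: "c = ereal r" "0 < r" using assms by (cases c) auto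
  define xs where "xs n = r - r / (real n + 2)" for n
  have "strict_mono xs"
  proof (rule strict_mono_Suc_iff[THEN iffD2], intro allI)
    fix n
    have "r / (real (Suc n) + 2) < r / (real n + 2)"
      using r by (intro divide_strict_left_mono) auto
    then show "xs n < xs (Suc n)" by (simp add: xs_def)
  qed
  moreover have "xs \<longlonglongrightarrow> r - 0"
  proof -
    have "filterlim (\<lambda>n::nat. 2 + real n) at_top sequentially"
      by (rule filterlim_tendsto_add_at_top[OF tendsto_const filterlim_real_sequentially])
    then have "filterlim (\<lambda>n::nat. real n + 2) at_top sequentially"
      by (simp add: add.commute)
    then have "(\<lambda>n. r / (real n + 2)) \<longlonglongrightarrow> 0"
      by (intro tendsto_divide_0[OF tendsto_const] filterlim_at_top_imp_at_infinity)
    then show ?thesis unfolding xs_def[abs_def] by (intro tendsto_diff tendsto_const)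
  qed
  moreover have "0 \<le> xs n \<and> xs n < r" for n
    using r by (auto simp: xs_def field_simps)
  ultimately show ?thesis using r
    apply (intro exI[of _ "\<lambda>n. ereal (xs n)"] conjI allI)
    apply (simp add: strict_mono_def)
    apply simp
    apply simp
    apply (metis diff_zero tendsto_ereal)
    done
qed


lemma lvl_meas:
  assumes "C \<in> sets M" "(k::'a \<Rightarrow> ereal) \<in> borel_measurable M"
  shows "C \<inter> {x\<in>space M. \<alpha> \<le> k x} \<in> sets M"
proof -
  have "{x\<in>space M. \<alpha> \<le> k x} \<in> sets M" using assms(2) by measurable
  then show ?thesis using assms(1) by blast
qed

lemma sugeno_inY:
  assumes Y: "Y = {0..T}" "0 \<le> T" and mu: "monotone_measure M Y \<mu>"
    and opc: "op_on Y circ" and C: "C \<in> sets M" and k: "k \<in> borel_measurable M"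
  shows "sugeno M Y circ \<mu> C k \<in> Y"
  unfolding sugeno_def
proof (rule SUP_inY[OF Y])
  fix \<alpha> assume a: "\<alpha> \<in> Y"
  have "\<mu> (C \<inter> {x\<in>space M. \<alpha> \<le> k x}) \<in> Y"
    using mu lvl_meas[OF C k] by (simp add: monotone_measure_def)
  then show "circ \<alpha> (\<mu> (C \<inter> {x\<in>space M. \<alpha> \<le> k x})) \<in> Y"
    using opc a by (simp add: op_on_def)
qed

lemma jensen:
  assumes Y: "Y = {0..T}" "T = 1 \<or> T = \<infinity>"
    and mu: "monotone_measure M Y \<mu>"
    and opc: "op_on Y circ"
    and H1: "\<And>a b t. a \<in> Y \<Longrightarrow> b \<in> Y \<Longrightarrow> t \<ge> 1 \<Longrightarrow>
               circ (ypow a t) b \<ge> ypow (circ a b) t"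
    and t: "t \<ge> 1" and C: "C \<in> sets M"
    and k: "k \<in> borel_measurable M" and kY: "\<And>x. x \<in> space M \<Longrightarrow> k x \<in> Y"
  shows "ypow (sugeno M Y circ \<mu> C k) t \<le> sugeno M Y circ \<mu> C (\<lambda>x. ypow (k x) t)"
proof -
  define J where "J = sugeno M Y circ \<mu> C (\<lambda>x. ypow (k x) t)"
  have T0: "0 \<le> T" using Y(2) by auto
  have t0: "0 < t" "0 < 1/t" using t by auto
  have muY: "\<mu> S \<in> Y" if "S \<in> sets M" for S using mu that by (simp add: monotone_measure_def)
  have circY: "circ a b \<in> Y" if "a \<in> Y" "b \<in> Y" for a b using opc that by (simp add: op_on_def)
  have Yge0: "0 \<le> y" if "y \<in> Y" for y using that Y(1) by simp
  have kmeas: "(\<lambda>x. ypow (k x) t) \<in> borel_measurable M" for t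
    using k unfolding ypow_def by measurable
  have JY: "J \<in> Y" unfolding J_def sugeno_def
  proof (rule SUP_inY[OF Y(1) T0])
    fix \<alpha> assume "\<alpha> \<in> Y"
    moreover have "C \<inter> {x\<in>space M. \<alpha> \<le> ypow (k x) t} \<in> sets M"
      using C kmeas[of t] by measurable
    ultimately show "circ \<alpha> (\<mu> (C \<inter> {x\<in>space M. \<alpha> \<le> ypow (k x) t})) \<in> Y"
      by (intro circY muY)
  qed
  have lvl: "C \<inter> {x\<in>space M. k x \<ge> \<alpha>} = C \<inter> {x\<in>space M. ypow (k x) t \<ge> ypow \<alpha> t}"
    if "\<alpha> \<in> Y" for \<alpha>
    using ypow_le_iff[OF Yge0[OF that] Yge0[OF kY] t0(1)] by blast
  have "sugeno M Y circ \<mu> C k \<le> ypow J (1/t)"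
    unfolding sugeno_def
  proof (rule SUP_least)
    fix \<alpha> assume a: "\<alpha> \<in> Y"
    define m where "m = \<mu> (C \<inter> {x\<in>space M. k x \<ge> \<alpha>})"
    have mY: "m \<in> Y" unfolding m_def using C k by (intro muY lvl_meas)
    have zY: "circ \<alpha> m \<in> Y" using a mY by (rule circY)
    have "ypow (circ \<alpha> m) t \<le> circ (ypow \<alpha> t) m" using H1 a mY t by blast
    also have "\<dots> = circ (ypow \<alpha> t) (\<mu> (C \<inter> {x\<in>space M. ypow (k x) t \<ge> ypow \<alpha> t}))"
      unfolding m_def lvl[OF a] ..
    also have "\<dots> \<le> J" unfolding J_def sugeno_def
      by (rule SUP_upper) (rule ypow_inY[OF Y a t0(1)])
    finally have "ypow (circ \<alpha> m) t \<le> J" .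
    then have "ypow (ypow (circ \<alpha> m) t) (1/t) \<le> ypow J (1/t)"
      using t by (intro ypow_mono ypow_nonneg) auto
    also have "ypow (ypow (circ \<alpha> m) t) (1/t) = circ \<alpha> m"
      using ypow_ypow[OF Yge0[OF zY] t0] ypow_1[OF Yge0[OF zY]] t0 by simp
    finally show "circ \<alpha> (\<mu> (C \<inter> {x\<in>space M. k x \<ge> \<alpha>})) \<le> ypow J (1/t)" unfolding m_def .
  qed
  then have "ypow (sugeno M Y circ \<mu> C k) t \<le> ypow (ypow J (1/t)) t"
    using JY t sugeno_inY[OF Y(1) T0 mu opc C k] by (intro ypow_mono) (auto intro!: Yge0)
  also have "\<dots> = J" using ypow_ypow[OF Yge0[OF JY] t0(2) t0(1)] ypow_1[OF Yge0[OF JY]] t0 by simp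
  finally show ?thesis unfolding J_def .
qed


lemma ypow_meas: assumes k: "k \<in> borel_measurable M" shows "(\<lambda>x. ypow (k x) t) \<in> borel_measurable M"
  using k unfolding ypow_def by measurable

lemma keyK:
  fixes circ box ocirc tri :: "ereal \<Rightarrow> ereal \<Rightarrow> ereal"
  assumes Y: "Y = {0..T}" "0 < T"
    and mu: "monotone_measure M Y \<mu>"
    and opc: "op_on Y circ" and opb: "op_on Y box" and opo: "op_on Y ocirc" and opt: "op_on Y tri"
    and ndc: "nondecreasing_op Y circ" and ndb: "nondecreasing_op Y box"
    and ndo: "nondecreasing_op Y ocirc"
    and lc: "left_continuous_op Y ocirc"
    and H2: "\<And>a b c d. a \<in> Y \<Longrightarrow> b \<in> Y \<Longrightarrow> c \<in> Y \<Longrightarrow> d \<in> Y \<Longrightarrow>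
               circ (box a b) (tri c d) \<ge> ocirc (circ a c) (circ b d)"
    and A: "A \<in> sets M" and B: "B \<in> sets M"
    and f: "f \<in> borel_measurable M" and g: "g \<in> borel_measurable M"
    and fY: "\<And>x. x \<in> space M \<Longrightarrow> f x \<in> Y" and gY: "\<And>x. x \<in> space M \<Longrightarrow> g x \<in> Y"
    and fg: "(\<lambda>x. box (f x) (g x)) \<in> borel_measurable M"
    and dep: "pos_dependent M Y \<mu> tri f A g B"
  shows "ocirc (sugeno M Y circ \<mu> A f) (sugeno M Y circ \<mu> B g)
         \<le> sugeno M Y circ \<mu> (A \<inter> B) (\<lambda>x. box (f x) (g x))"
proof -
  define LA where "LA \<alpha> = A \<inter> {x\<in>space M. \<alpha> \<le> f x}" for \<alpha>
  define LB where "LB \<beta> = B \<inter> {x\<in>space M. \<beta> \<le> g x}" for \<beta>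
  define J where "J = sugeno M Y circ \<mu> (A \<inter> B) (\<lambda>x. box (f x) (g x))"
  define If where "If = sugeno M Y circ \<mu> A f"
  define Ig where "Ig = sugeno M Y circ \<mu> B g"
  have T0: "0 \<le> T" using Y(2) by simp
  have Yiff: "y \<in> Y \<longleftrightarrow> 0 \<le> y \<and> y \<le> T" for y using Y(1) by simp
  have TY: "T \<in> Y" and ZY: "0 \<in> Y" using Yiff T0 by auto
  have LAs: "LA \<alpha> \<in> sets M" for \<alpha> unfolding LA_def by (rule lvl_meas[OF A f])
  have LBs: "LB \<alpha> \<in> sets M" for \<alpha> unfolding LB_def by (rule lvl_meas[OF B g])
  have muY: "\<mu> S \<in> Y" if "S \<in> sets M" for S using mu that by (simp add: monotone_measure_def)
  have mumono: "\<mu> S \<le> \<mu> S'" if "S \<in> sets M" "S' \<in> sets M" "S \<subseteq> S'" for S S'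
    using mu that by (simp add: monotone_measure_def)
  have circY: "circ a b \<in> Y" if "a \<in> Y" "b \<in> Y" for a b using opc that by (simp add: op_on_def)
  have boxY: "box a b \<in> Y" if "a \<in> Y" "b \<in> Y" for a b using opb that by (simp add: op_on_def)
  have ocY: "ocirc a b \<in> Y" if "a \<in> Y" "b \<in> Y" for a b using opo that by (simp add: op_on_def)
  have triY: "tri a b \<in> Y" if "a \<in> Y" "b \<in> Y" for a b using opt that by (simp add: op_on_def)
  have ndc': "circ b d \<le> circ a c" if "a \<in> Y" "b \<in> Y" "c \<in> Y" "d \<in> Y" "b \<le> a" "d \<le> c" for a b c d
    using ndc that unfolding nondecreasing_op_def by blast
  have ndb': "box b d \<le> box a c" if "a \<in> Y" "b \<in> Y" "c \<in> Y" "d \<in> Y" "b \<le> a" "d \<le> c" for a b c d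
    using ndb that unfolding nondecreasing_op_def by blast
  have ndo': "ocirc b d \<le> ocirc a c" if "a \<in> Y" "b \<in> Y" "c \<in> Y" "d \<in> Y" "b \<le> a" "d \<le> c" for a b c d
    using ndo that unfolding nondecreasing_op_def by blast
  have depLL: "tri (\<mu> (LA a)) (\<mu> (LB b)) \<le> \<mu> (LA a \<inter> LB b)" if "a \<in> Y" "b \<in> Y" for a b
    using dep that unfolding pos_dependent_def LA_def LB_def by blast
  have JY: "J \<in> Y" unfolding J_def by (rule sugeno_inY[OF Y(1) T0 mu opc sets.Int[OF A B] fg])
  have IfY: "If \<in> Y" unfolding If_def by (rule sugeno_inY[OF Y(1) T0 mu opc A f])
  have IgY: "Ig \<in> Y" unfolding Ig_def by (rule sugeno_inY[OF Y(1) T0 mu opc B g])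
  have If_eq: "If = (SUP \<alpha>\<in>Y. circ \<alpha> (\<mu> (LA \<alpha>)))" unfolding If_def sugeno_def LA_def ..
  have Ig_eq: "Ig = (SUP \<alpha>\<in>Y. circ \<alpha> (\<mu> (LB \<alpha>)))" unfolding Ig_def sugeno_def LB_def ..
  have cA: "circ \<alpha> (\<mu> (LA \<alpha>)) \<in> Y" if "\<alpha> \<in> Y" for \<alpha> using that LAs muY circY by blast
  have cB: "circ \<alpha> (\<mu> (LB \<alpha>)) \<in> Y" if "\<alpha> \<in> Y" for \<alpha> using that LBs muY circY by blast
  have P: "ocirc (circ \<alpha> (\<mu> (LA \<alpha>))) (circ \<beta> (\<mu> (LB \<beta>))) \<le> J" if a: "\<alpha> \<in> Y" and b: "\<beta> \<in> Y" for \<alpha> \<beta>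
  proof -
    define S where "S = (A \<inter> B) \<inter> {x\<in>space M. box \<alpha> \<beta> \<le> box (f x) (g x)}"
    have Ss: "S \<in> sets M" unfolding S_def by (rule lvl_meas[OF sets.Int[OF A B] fg])
    have LLs: "LA \<alpha> \<inter> LB \<beta> \<in> sets M" using LAs LBs by blast
    have sub: "LA \<alpha> \<inter> LB \<beta> \<subseteq> S"
    proof
      fix x assume x: "x \<in> LA \<alpha> \<inter> LB \<beta>"
      then have xs: "x \<in> space M" "\<alpha> \<le> f x" "\<beta> \<le> g x" "x \<in> A" "x \<in> B"
        unfolding LA_def LB_def by auto
      have "box \<alpha> \<beta> \<le> box (f x) (g x)" by (rule ndb'[OF fY[OF xs(1)] a gY[OF xs(1)] b xs(2) xs(3)])
      then show "x \<in> S" using xs unfolding S_def by auto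
    qed
    have "ocirc (circ \<alpha> (\<mu> (LA \<alpha>))) (circ \<beta> (\<mu> (LB \<beta>)))
          \<le> circ (box \<alpha> \<beta>) (tri (\<mu> (LA \<alpha>)) (\<mu> (LB \<beta>)))"
      using H2[OF a b muY[OF LAs] muY[OF LBs]] .
    also have "\<dots> \<le> circ (box \<alpha> \<beta>) (\<mu> (LA \<alpha> \<inter> LB \<beta>))"
      by (rule ndc'[OF boxY[OF a b] boxY[OF a b] muY[OF LLs] triY[OF muY[OF LAs] muY[OF LBs]] order.refl depLL[OF a b]])
    also have "\<dots> \<le> circ (box \<alpha> \<beta>) (\<mu> S)"
      by (rule ndc'[OF boxY[OF a b] boxY[OF a b] muY[OF Ss] muY[OF LLs] order.refl mumono[OF LLs Ss sub]])
    also have "\<dots> \<le> J" unfolding J_def sugeno_def S_def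
      by (rule SUP_upper) (rule boxY[OF a b])
    finally show ?thesis .
  qed
  have J0: "0 \<le> J" using JY Yiff by auto
  have bTT: "box T T \<le> T" using boxY[OF TY TY] Yiff by auto
  have "ocirc If Ig \<le> J"
  proof (cases "Ig = 0")
    case True
    have "If \<le> circ T (\<mu> (LA 0))" unfolding If_eq
    proof (rule SUP_least)
      fix \<alpha> assume a: "\<alpha> \<in> Y"
      have sub: "LA \<alpha> \<subseteq> LA 0" using a Y(1) unfolding LA_def by auto
      have aT: "\<alpha> \<le> T" using a Y(1) by simp
      show "circ \<alpha> (\<mu> (LA \<alpha>)) \<le> circ T (\<mu> (LA 0))"
        by (rule ndc'[OF TY a muY[OF LAs] muY[OF LAs] aT mumono[OF LAs LAs sub]])
    qed
    moreover have "Ig \<le> circ T (\<mu> (LB T))" using True cB[OF TY] Yiff by auto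
    ultimately have "ocirc If Ig \<le> ocirc (circ T (\<mu> (LA 0))) (circ T (\<mu> (LB T)))"
      by (rule ndo'[OF circY[OF TY muY[OF LAs]] IfY cB[OF TY] IgY])
    also have "\<dots> \<le> circ (box T T) (tri (\<mu> (LA 0)) (\<mu> (LB T)))"
      using H2[OF TY TY muY[OF LAs] muY[OF LBs]] .
    also have "\<dots> \<le> circ (box T T) (\<mu> (LA 0 \<inter> LB T))"
      by (rule ndc'[OF boxY[OF TY TY] boxY[OF TY TY] muY[OF sets.Int[OF LAs LBs]] triY[OF muY[OF LAs] muY[OF LBs]] order.refl depLL[OF ZY TY]])
    also have "\<dots> \<le> circ T (\<mu> (LB T))"
      by (rule ndc'[OF TY boxY[OF TY TY] muY[OF LBs] muY[OF sets.Int[OF LAs LBs]] bTT mumono[OF sets.Int[OF LAs LBs] LBs]]) blast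
    also have "\<dots> \<le> Ig" unfolding Ig_eq by (rule SUP_upper[OF TY])
    finally have "ocirc If Ig \<le> Ig" .
    then show ?thesis using True J0 by (metis order_trans)
  next
    case Ig0: False
    show ?thesis
    proof (cases "If = 0")
      case True
      have "Ig \<le> circ T (\<mu> (LB 0))" unfolding Ig_eq
      proof (rule SUP_least)
        fix \<alpha> assume a: "\<alpha> \<in> Y"
        have sub: "LB \<alpha> \<subseteq> LB 0" using a Y(1) unfolding LB_def by auto
        have aT: "\<alpha> \<le> T" using a Y(1) by simp
        show "circ \<alpha> (\<mu> (LB \<alpha>)) \<le> circ T (\<mu> (LB 0))"
          by (rule ndc'[OF TY a muY[OF LBs] muY[OF LBs] aT mumono[OF LBs LBs sub]])
      qed
      moreover have "If \<le> circ T (\<mu> (LA T))" using True cA[OF TY] Yiff by auto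
      ultimately have "ocirc If Ig \<le> ocirc (circ T (\<mu> (LA T))) (circ T (\<mu> (LB 0)))"
        by (metis ndo'[OF cA[OF TY] IfY circY[OF TY muY[OF LBs]] IgY])
      also have "\<dots> \<le> circ (box T T) (tri (\<mu> (LA T)) (\<mu> (LB 0)))"
        using H2[OF TY TY muY[OF LAs] muY[OF LBs]] .
      also have "\<dots> \<le> circ (box T T) (\<mu> (LA T \<inter> LB 0))"
        by (rule ndc'[OF boxY[OF TY TY] boxY[OF TY TY] muY[OF sets.Int[OF LAs LBs]] triY[OF muY[OF LAs] muY[OF LBs]] order.refl depLL[OF TY ZY]])
      also have "\<dots> \<le> circ T (\<mu> (LA T))"
        by (rule ndc'[OF TY boxY[OF TY TY] muY[OF LAs] muY[OF sets.Int[OF LAs LBs]] bTT mumono[OF sets.Int[OF LAs LBs] LAs]]) blast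
      also have "\<dots> \<le> If" unfolding If_eq by (rule SUP_upper[OF TY])
      finally have "ocirc If Ig \<le> If" .
      then show ?thesis using True J0 by (metis order_trans)
    next
      case If0: False
      have pf: "0 < If" using If0 IfY[unfolded Yiff] by (simp add: order_less_le)
      have pg: "0 < Ig" using Ig0 IgY[unfolded Yiff] by (simp add: order_less_le)
      obtain xs where xs: "strict_mono xs" "\<And>n. 0 \<le> xs n \<and> xs n < If" "xs \<longlonglongrightarrow> If"
        using approx_seq[OF pf] by blast
      obtain ys where ys: "strict_mono ys" "\<And>n. 0 \<le> ys n \<and> ys n < Ig" "ys \<longlonglongrightarrow> Ig"
        using approx_seq[OF pg] by blast
      have xsY: "xs n \<in> Y" for n unfolding Yiff using xs(2)[of n] IfY[unfolded Yiff] by (meson less_imp_le order_trans)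
      have ysY: "ys n \<in> Y" for n unfolding Yiff using ys(2)[of n] IgY[unfolded Yiff] by (meson less_imp_le order_trans)
      have bound: "ocirc (xs n) (ys n) \<le> J" for n
      proof -
        have "xs n < (SUP \<alpha>\<in>Y. circ \<alpha> (\<mu> (LA \<alpha>)))" using xs(2)[of n] If_eq by simp
        then obtain \<alpha> where a: "\<alpha> \<in> Y" "xs n < circ \<alpha> (\<mu> (LA \<alpha>))" unfolding less_SUP_iff by blast
        have "ys n < (SUP \<alpha>\<in>Y. circ \<alpha> (\<mu> (LB \<alpha>)))" using ys(2)[of n] Ig_eq by simp
        then obtain \<beta> where b: "\<beta> \<in> Y" "ys n < circ \<beta> (\<mu> (LB \<beta>))" unfolding less_SUP_iff by blast
        have "ocirc (xs n) (ys n) \<le> ocirc (circ \<alpha> (\<mu> (LA \<alpha>))) (circ \<beta> (\<mu> (LB \<beta>)))"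
          using a(2) b(2) by (intro ndo'[OF cA[OF a(1)] xsY cB[OF b(1)] ysY]) auto
        also have "\<dots> \<le> J" by (rule P[OF a(1) b(1)])
        finally show ?thesis .
      qed
      have conj: "(\<forall>n. xs n \<in> Y \<and> ys n \<in> Y) \<and> If \<in> Y \<and> Ig \<in> Y \<and>
        strict_mono xs \<and> strict_mono ys \<and> xs \<longlonglongrightarrow> If \<and> ys \<longlonglongrightarrow> Ig"
        using xs(1,3) ys(1,3) xsY ysY IfY IgY by blast
      have lim: "(\<lambda>n. ocirc (xs n) (ys n)) \<longlonglongrightarrow> ocirc If Ig"
        by (rule lc[unfolded left_continuous_op_def, THEN spec, THEN spec, THEN spec, THEN spec, THEN mp, OF conj])
      show ?thesis by (rule LIMSEQ_le_const2[OF lim]) (use bound in blast)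
    qed
  qed
  then show ?thesis unfolding If_def Ig_def J_def .
qed

theorem mainTheorem1:
  fixes M :: "'a measure" and Y :: "ereal set" and \<mu> :: "'a set \<Rightarrow> ereal"
    and circ star box ocirc tri :: "ereal \<Rightarrow> ereal \<Rightarrow> ereal"
    and p q r s :: real and A B :: "'a set" and f g h :: "'a \<Rightarrow> ereal"
  assumes Y: "Yset_ok Y"
    and mu: "monotone_measure M Y \<mu>"
    and ops: "op_on Y circ" "op_on Y star" "op_on Y box" "op_on Y ocirc" "op_on Y tri"
    and nd: "nondecreasing_op Y circ" "nondecreasing_op Y star" "nondecreasing_op Y box"
            "nondecreasing_op Y ocirc"
    and lc: "left_continuous_op Y ocirc"
    and H1: "\<And>a b t. a \<in> Y \<Longrightarrow> b \<in> Y \<Longrightarrow> t \<ge> 1 \<Longrightarrow>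
               circ (ypow a t) b \<ge> ypow (circ a b) t"
    and H2: "\<And>a b c d. a \<in> Y \<Longrightarrow> b \<in> Y \<Longrightarrow> c \<in> Y \<Longrightarrow> d \<in> Y \<Longrightarrow>
               circ (box a b) (tri c d) \<ge> ocirc (circ a c) (circ b d)"
    and pq: "p \<ge> 1" "q \<ge> 1" and rs: "r > 0" "s > 0"
    and AB: "A \<in> sets M" "B \<in> sets M"
    and meas: "f \<in> borel_measurable M" "g \<in> borel_measurable M" "h \<in> borel_measurable M"
    and range: "\<And>x. x \<in> space M \<Longrightarrow> f x \<in> Y \<and> g x \<in> Y \<and> h x \<in> Y"
    and meas2: "(\<lambda>x. box (f x) (g x)) \<in> borel_measurable M"
               "(\<lambda>x. box (f x) (h x)) \<in> borel_measurable M"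
    and dep: "pos_dependent M Y \<mu> tri f A g B" "pos_dependent M Y \<mu> tri f A h B"
  shows "star (ypow (ocirc (sugeno M Y circ \<mu> A f) (sugeno M Y circ \<mu> B g)) r)
              (ypow (ocirc (sugeno M Y circ \<mu> A f) (sugeno M Y circ \<mu> B h)) s)
         \<le> star (ypow (sugeno M Y circ \<mu> (A \<inter> B) (\<lambda>x. ypow (box (f x) (g x)) p)) (r / p))
                (ypow (sugeno M Y circ \<mu> (A \<inter> B) (\<lambda>x. ypow (box (f x) (h x)) q)) (s / q))"
proof -
  obtain T where Y1: "Y = {0..T}" and T: "T = 1 \<or> T = \<infinity>"
    using Y unfolding Yset_ok_def by blast
  have T0: "0 < T" "0 \<le> T" using T by auto
  have Yge0: "0 \<le> y" if "y \<in> Y" for y using that Y1 by simp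
  define If where "If = sugeno M Y circ \<mu> A f"
  define Ig where "Ig = sugeno M Y circ \<mu> B g"
  define Ih where "Ih = sugeno M Y circ \<mu> B h"
  define J1 where "J1 = sugeno M Y circ \<mu> (A \<inter> B) (\<lambda>x. box (f x) (g x))"
  define J2 where "J2 = sugeno M Y circ \<mu> (A \<inter> B) (\<lambda>x. box (f x) (h x))"
  define Jp where "Jp = sugeno M Y circ \<mu> (A \<inter> B) (\<lambda>x. ypow (box (f x) (g x)) p)"
  define Jq where "Jq = sugeno M Y circ \<mu> (A \<inter> B) (\<lambda>x. ypow (box (f x) (h x)) q)"
  have AB': "A \<inter> B \<in> sets M" using AB by blast
  have fY: "\<And>x. x \<in> space M \<Longrightarrow> f x \<in> Y" and gY: "\<And>x. x \<in> space M \<Longrightarrow> g x \<in> Y"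
    and hY: "\<And>x. x \<in> space M \<Longrightarrow> h x \<in> Y" using range by auto
  have boxY: "box a b \<in> Y" if "a \<in> Y" "b \<in> Y" for a b using ops(3) that by (simp add: op_on_def)
  have ocY: "ocirc a b \<in> Y" if "a \<in> Y" "b \<in> Y" for a b using ops(4) that by (simp add: op_on_def)
  have K1: "ocirc If Ig \<le> J1" unfolding If_def Ig_def J1_def
    by (rule keyK[OF Y1 T0(1) mu ops(1) ops(3) ops(4) ops(5) nd(1) nd(3) nd(4) lc H2 AB
          meas(1) meas(2) fY gY meas2(1) dep(1)])
  have K2: "ocirc If Ih \<le> J2" unfolding If_def Ih_def J2_def
    by (rule keyK[OF Y1 T0(1) mu ops(1) ops(3) ops(4) ops(5) nd(1) nd(3) nd(4) lc H2 AB
          meas(1) meas(3) fY hY meas2(2) dep(2)])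
  have E1: "ypow J1 p \<le> Jp" unfolding J1_def Jp_def
    apply (rule jensen[OF Y1 T mu ops(1) _ pq(1) AB' meas2(1)])
     apply (simp add: H1)
    apply (intro boxY fY gY)
     apply assumption+
    done
  have E2: "ypow J2 q \<le> Jq" unfolding J2_def Jq_def
    apply (rule jensen[OF Y1 T mu ops(1) _ pq(2) AB' meas2(2)])
     apply (simp add: H1)
    apply (intro boxY fY hY)
     apply assumption+
    done
  have IfY: "If \<in> Y" unfolding If_def by (rule sugeno_inY[OF Y1 T0(2) mu ops(1) AB(1) meas(1)])
  have IgY: "Ig \<in> Y" unfolding Ig_def by (rule sugeno_inY[OF Y1 T0(2) mu ops(1) AB(2) meas(2)])
  have IhY: "Ih \<in> Y" unfolding Ih_def by (rule sugeno_inY[OF Y1 T0(2) mu ops(1) AB(2) meas(3)])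
  have J1Y: "J1 \<in> Y" unfolding J1_def by (rule sugeno_inY[OF Y1 T0(2) mu ops(1) AB' meas2(1)])
  have J2Y: "J2 \<in> Y" unfolding J2_def by (rule sugeno_inY[OF Y1 T0(2) mu ops(1) AB' meas2(2)])
  have JpY: "Jp \<in> Y" unfolding Jp_def
    by (rule sugeno_inY[OF Y1 T0(2) mu ops(1) AB' ypow_meas[OF meas2(1)]])
  have JqY: "Jq \<in> Y" unfolding Jq_def
    by (rule sugeno_inY[OF Y1 T0(2) mu ops(1) AB' ypow_meas[OF meas2(2)]])
  have rp: "0 < r / p" "p * (r / p) = r" using pq rs by auto
  have sq: "0 < s / q" "q * (s / q) = s" using pq rs by auto
  have L1: "ypow (ocirc If Ig) r \<le> ypow Jp (r / p)"
  proof -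
    have "ypow (ocirc If Ig) r \<le> ypow J1 r"
      using K1 rs(1) by (intro ypow_mono Yge0 ocY IfY IgY) auto
    also have "\<dots> = ypow (ypow J1 p) (r / p)"
      using ypow_ypow[OF Yge0[OF J1Y], of p "r/p"] pq(1) rp by simp
    also have "\<dots> \<le> ypow Jp (r / p)"
      using E1 rp(1) by (intro ypow_mono ypow_nonneg) auto
    finally show ?thesis .
  qed
  have L2: "ypow (ocirc If Ih) s \<le> ypow Jq (s / q)"
  proof -
    have "ypow (ocirc If Ih) s \<le> ypow J2 s"
      using K2 rs(2) by (intro ypow_mono Yge0 ocY IfY IhY) auto
    also have "\<dots> = ypow (ypow J2 q) (s / q)"
      using ypow_ypow[OF Yge0[OF J2Y], of q "s/q"] pq(2) sq by simp
    also have "\<dots> \<le> ypow Jq (s / q)"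
      using E2 sq(1) by (intro ypow_mono ypow_nonneg) auto
    finally show ?thesis .
  qed
  have "star (ypow (ocirc If Ig) r) (ypow (ocirc If Ih) s) \<le> star (ypow Jp (r / p)) (ypow Jq (s / q))"
    using nd(2) L1 L2 ypow_inY[OF Y1 T JpY rp(1)] ypow_inY[OF Y1 T JqY sq(1)]
      ypow_inY[OF Y1 T ocY[OF IfY IgY] rs(1)] ypow_inY[OF Y1 T ocY[OF IfY IhY] rs(2)]
    unfolding nondecreasing_op_def by blast
  then show ?thesis unfolding If_def Ig_def Ih_def Jp_def Jq_def .
qed

end
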